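(* Let $n\ge1$, $\mathbf{A}=\{a_1,\dots,a_n\}$, and let $\mathbf{S}_2^n=\{XY : X,Y\in\mathbf{A}^*\setminus\{\emptyset\},\ \overline{\nu}(X)=\overline{\nu}(Y)\}$. Then no minimal crucial word with respect to $\mathbf{S}_2^n$ contains three distinct letters each of which occurs exactly twice in the word.
   Context: A word over $\mathbf{A}$ is a finite sequence of letters; $\mathbf{A}^*$ is the set of all words. A subword is a block of consecutive letters. For a word $X$, the content vector is $\overline{\nu}(X)=(\nu_1(X),\dots,\nu_n(X))$, where $\nu_i(X)$ is the number of occurrences of $a_i$ in $X$. For $\mathbf{S}\subseteq\mathbf{A}^*$, a word is free from $\mathbf{S}$ if none of its subwords belongs to $\mathbf{S}$. A word $X$ free from $\mathbf{S}$ is crucial with respect to $\mathbf{S}$ if for every letter $a\in\mathbf{A}$ the word $Xa$ contains a subword belonging to $\mathbf{S}$. A minimal crucial word is a crucial word of smallest possible length. *)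

theory Defs
  imports Main
begin

text \<open>Alphabet A = {a_1,...,a_n}, letter a_i represented by the natural number i.\<close>
definition alphabet :: "nat \<Rightarrow> nat set" where
  "alphabet n = {1..n}"

definition words :: "nat \<Rightarrow> nat list set" where
  "words n = {w. set w \<subseteq> alphabet n}"

definition nu :: "nat \<Rightarrow> nat list \<Rightarrow> nat" where
  "nu i X = count_list X i"

definition content :: "nat \<Rightarrow> nat list \<Rightarrow> nat list" where
  "content n X = map (\<lambda>i. nu i X) [1..<n+1]"

definition S2 :: "nat \<Rightarrow> nat list set" where
  "S2 n = {X @ Y | X Y. X \<in> words n \<and> Y \<in> words n \<and> X \<noteq> [] \<and> Y \<noteq> []
                        \<and> content n X = content n Y}"

definition subword :: "'a list \<Rightarrow> 'a list \<Rightarrow> bool" where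
  "subword u w \<longleftrightarrow> (\<exists>p q. w = p @ u @ q)"

definition free_from :: "'a list set \<Rightarrow> 'a list \<Rightarrow> bool" where
  "free_from S w \<longleftrightarrow> (\<forall>u. subword u w \<longrightarrow> u \<notin> S)"

definition crucial :: "'a set \<Rightarrow> 'a list set \<Rightarrow> 'a list \<Rightarrow> bool" where
  "crucial A S w \<longleftrightarrow> set w \<subseteq> A \<and> free_from S w \<and>
     (\<forall>a\<in>A. \<exists>u. subword u (w @ [a]) \<and> u \<in> S)"

definition minimal_crucial :: "'a set \<Rightarrow> 'a list set \<Rightarrow> 'a list \<Rightarrow> bool" where
  "minimal_crucial A S w \<longleftrightarrow> crucial A S w \<and>
     (\<forall>v. crucial A S v \<longrightarrow> length w \<le> length v)"

end

theory Submission
  imports Defs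
begin



lemma content_count:
  assumes "content n X = content n Y" "i \<in> alphabet n"
  shows "count_list X i = count_list Y i"
proof -
  have "map (\<lambda>i. nu i X) [1..<n+1] = map (\<lambda>i. nu i Y) [1..<n+1]"
    using assms(1) by (simp only: content_def)
  moreover have "i \<in> set [1..<n+1]" using assms(2) by (auto simp: alphabet_def)
  ultimately have "nu i X = nu i Y" by (metis map_eq_conv)
  then show ?thesis by (simp add: nu_def)
qed

lemma words_count_all:
  assumes "X \<in> words n" "Y \<in> words n" "content n X = content n Y"
  shows "count_list X b = count_list Y b"
proof (cases "b \<in> alphabet n")
  case True then show ?thesis using content_count assms(3) by blast
next
  case False
  then have "b \<notin> set X" "b \<notin> set Y" using assms(1,2) by (auto simp: words_def)
  then show ?thesis by simp
qed

lemma words_len_eq: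
  assumes "X \<in> words n" "Y \<in> words n" "content n X = content n Y"
  shows "length X = length Y"
proof -
  have fin: "finite (alphabet n)" by (simp add: alphabet_def)
  have "length X = sum (count_list X) (alphabet n)"
    using sum_count_set[of X "alphabet n"] assms(1) fin by (simp add: words_def)
  also have "\<dots> = sum (count_list Y) (alphabet n)"
    using words_count_all[OF assms] by simp
  also have "\<dots> = length Y"
    using sum_count_set[of Y "alphabet n"] assms(2) fin by (simp add: words_def)
  finally show ?thesis .
qed



locale nearsys =
  fixes N :: "nat \<Rightarrow> nat \<Rightarrow> nat" and kf :: "nat \<Rightarrow> nat" and A :: "nat set"
  assumes mono: "\<And>b s t. s \<le> t \<Longrightarrow> N b s \<le> N b t"
    and near: "\<And>x b. x \<in> A \<Longrightarrow> (if b = x then 1 else 0) + 2 * N b (kf x - 1) = N b (2 * kf x - 1)"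
    and kpos: "\<And>x. x \<in> A \<Longrightarrow> 1 \<le> kf x"
begin

lemma near_self: "x \<in> A \<Longrightarrow> 1 + 2 * N x (kf x - 1) = N x (2 * kf x - 1)"
  using near[of x x] by simp

lemma near_other: "x \<in> A \<Longrightarrow> b \<noteq> x \<Longrightarrow> 2 * N b (kf x - 1) = N b (2 * kf x - 1)"
  using near[of x b] by simp

lemma kf_inj: "x \<in> A \<Longrightarrow> y \<in> A \<Longrightarrow> kf x = kf y \<Longrightarrow> x = y"
  using near_self[of x] near_other[of y x] by force

lemma middle:
  assumes "y1 \<in> A" "y2 \<in> A" "y3 \<in> A"
    and "kf y1 < kf y2" "kf y2 < kf y3"
    and "kf y1 \<le> M" "kf y2 \<le> M" "kf y3 \<le> M"
    and "N y1 (M - 1) = 1" "N y1 (2 * M - 1) = 2"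
    and "N y3 (M - 1) = 1" "N y3 (2 * M - 1) = 2"
    and "y1 \<noteq> y2" "y3 \<noteq> y2"
  shows False
proof -
  define k where "k = kf y2"
  have k1: "1 \<le> kf y1" using kpos assms(1) by auto
  have e1: "1 + 2 * N y1 (kf y1 - 1) = N y1 (2 * kf y1 - 1)" using near_self assms(1) by auto
  have e2: "2 * N y1 (k - 1) = N y1 (2 * k - 1)" using near_other assms k_def by auto
  have "N y1 (2 * kf y1 - 1) \<le> N y1 (2 * k - 1)" using mono assms(4) k_def by simp
  then have "N y1 (k - 1) \<ge> 1" using e1 e2 by linarith
  moreover have "N y1 (k - 1) \<le> N y1 (M - 1)" using mono[of "k - 1" "M - 1" y1] assms(7) k_def by simp
  ultimately have "N y1 (k - 1) = 1" using assms by linarith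
  then have A1: "N y1 (2 * k - 1) = 2" using e2 by simp
  have gt: "2 * k - 1 > M - 1"
  proof (rule ccontr)
    assume "\<not> ?thesis"
    then have "N y1 (2 * k - 1) \<le> N y1 (M - 1)" using mono by simp
    then show False using A1 assms by simp
  qed
  have e3: "1 + 2 * N y3 (kf y3 - 1) = N y3 (2 * kf y3 - 1)" using near_self assms(3) by auto
  have "N y3 (2 * kf y3 - 1) \<le> N y3 (2 * M - 1)" using mono[of "2 * kf y3 - 1" "2 * M - 1" y3] assms(8) by simp
  then have "N y3 (kf y3 - 1) = 0" using e3 assms by linarith
  moreover have "N y3 (k - 1) \<le> N y3 (kf y3 - 1)" using mono assms k_def by simp
  ultimately have "N y3 (k - 1) = 0" by simp
  moreover have e4: "2 * N y3 (k - 1) = N y3 (2 * k - 1)" using near_other assms k_def by auto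
  ultimately have z3: "N y3 (2 * k - 1) = 0" by simp
  have "N y3 (M - 1) \<le> N y3 (2 * k - 1)" using mono gt by simp
  then show False using z3 assms by simp
qed

lemma three:
  assumes "y1 \<in> A" "y2 \<in> A" "y3 \<in> A" "y1 \<noteq> y2" "y1 \<noteq> y3" "y2 \<noteq> y3"
    and "\<And>y. y \<in> {y1, y2, y3} \<Longrightarrow> kf y \<le> M \<and> N y (M - 1) = 1 \<and> N y (2 * M - 1) = 2"
  shows False
proof -
  have d12: "kf y1 \<noteq> kf y2" using kf_inj assms by blast
  have d13: "kf y1 \<noteq> kf y3" using kf_inj assms by blast
  have d23: "kf y2 \<noteq> kf y3" using kf_inj assms by blast
  have P: "\<And>a b c. a \<in> {y1,y2,y3} \<Longrightarrow> b \<in> {y1,y2,y3} \<Longrightarrow> c \<in> {y1,y2,y3} \<Longrightarrow>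
      kf a < kf b \<Longrightarrow> kf b < kf c \<Longrightarrow> False"
  proof -
    fix a b c assume h: "a \<in> {y1,y2,y3}" "b \<in> {y1,y2,y3}" "c \<in> {y1,y2,y3}" "kf a < kf b" "kf b < kf c"
    have "a \<in> A" "b \<in> A" "c \<in> A" using h assms by auto
    moreover have "a \<noteq> b" "c \<noteq> b" using h by auto
    ultimately show False using middle[of a b c M] h assms(7)[of a] assms(7)[of b] assms(7)[of c] by blast
  qed
  show False
    using d12 d13 d23 P[of y1 y2 y3] P[of y1 y3 y2] P[of y2 y1 y3] P[of y2 y3 y1]
      P[of y3 y1 y2] P[of y3 y2 y1] by (meson insertI1 insertI2 linorder_neqE_nat)
qed

lemma count_bound:
  fixes cnt :: "nat \<Rightarrow> nat" and a b c :: nat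
  assumes fin: "finite A" and bound: "\<And>b t. N b t \<le> cnt b"
    and abc: "a \<in> A" "b \<in> A" "c \<in> A" "a \<noteq> b" "a \<noteq> c" "b \<noteq> c"
    and c2: "cnt a = 2" "cnt b = 2" "cnt c = 2"
  shows "6 + 4 * (card A - 3) \<le> sum cnt A"
proof -
  define M where "M = Max (kf ` A)"
  have ne: "A \<noteq> {}" using abc by auto
  have kM: "\<And>x. x \<in> A \<Longrightarrow> kf x \<le> M" using fin M_def by simp
  have "M \<in> kf ` A" using Max_in[of "kf ` A"] fin ne M_def by simp
  then obtain z where z: "z \<in> A" "kf z = M" by auto
  have L3: "\<And>y. y \<in> A \<Longrightarrow> y \<noteq> z \<Longrightarrow> 2 * N y (M - 1) = N y (2 * M - 1)"
    using near_other z by metis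
  have L4: "\<And>y. y \<in> A \<Longrightarrow> y \<noteq> z \<Longrightarrow> N y (M - 1) \<ge> 1"
  proof (rule ccontr)
    fix y assume y: "y \<in> A" "y \<noteq> z" "\<not> N y (M - 1) \<ge> 1"
    then have "N y (2 * M - 1) = 0" using L3 by fastforce
    moreover have "N y (2 * kf y - 1) \<le> N y (2 * M - 1)" using mono[of "2 * kf y - 1" "2 * M - 1" y] kM[of y] y by simp
    ultimately show False using near_self[of y] y by simp
  qed
  have one: "\<And>y. y \<in> A \<Longrightarrow> y \<noteq> z \<Longrightarrow> cnt y = 2 \<Longrightarrow> kf y \<le> M \<and> N y (M - 1) = 1 \<and> N y (2 * M - 1) = 2"
  proof -
    fix y assume y: "y \<in> A" "y \<noteq> z" "cnt y = 2"
    have "N y (2 * M - 1) \<le> 2" using bound[of y] y by simp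
    then show "kf y \<le> M \<and> N y (M - 1) = 1 \<and> N y (2 * M - 1) = 2"
      using L3[OF y(1,2)] L4[OF y(1,2)] kM[OF y(1)] by linarith
  qed
  have zin: "z = a \<or> z = b \<or> z = c"
  proof (rule ccontr)
    assume "\<not> ?thesis"
    then show False using three[of a b c M] abc c2 one by blast
  qed
  have four: "\<And>y. y \<in> A - {a, b, c} \<Longrightarrow> 4 \<le> cnt y"
  proof -
    fix y assume y: "y \<in> A - {a, b, c}"
    have yz: "y \<noteq> z" using zin y by auto
    have "N y (M - 1) \<noteq> 1"
    proof
      assume h: "N y (M - 1) = 1"
      then have hy: "kf y \<le> M \<and> N y (M - 1) = 1 \<and> N y (2 * M - 1) = 2"
        using L3[of y] yz y kM by auto
      from zin show False
      proof (elim disjE)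
        assume "z = a" then show False using three[of b c y M] abc c2 one hy y by auto
      next
        assume "z = b" then show False using three[of a c y M] abc c2 one hy y by auto
      next
        assume "z = c" then show False using three[of a b y M] abc c2 one hy y by auto
      qed
    qed
    then have "N y (M - 1) \<ge> 2" using L4[of y] y yz by auto
    then have "N y (2 * M - 1) \<ge> 4" using L3[of y] y yz by auto
    then show "4 \<le> cnt y" using bound[of y "2 * M - 1"] by simp
  qed
  have sub: "{a, b, c} \<subseteq> A" using abc by auto
  have s1: "sum cnt A = sum cnt {a, b, c} + sum cnt (A - {a, b, c})"
    using sum.subset_diff[OF sub fin, of cnt] by simp
  have s2: "sum cnt {a, b, c} = 6" using abc c2 by simp
  have s3: "sum cnt (A - {a, b, c}) \<ge> sum (\<lambda>_. 4) (A - {a, b, c})"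
    using four by (intro sum_mono) auto
  have s4: "sum (\<lambda>_. 4::nat) (A - {a, b, c}) = 4 * card (A - {a, b, c})" by simp
  have s5: "card (A - {a, b, c}) = card A - 3"
    using card_Diff_subset[OF _ sub] fin abc by (simp add: finite_subset[OF sub])
  show ?thesis using s1 s2 s3 s4 s5 by linarith
qed

end

lemma crucial_near:
  assumes cr: "crucial (alphabet n) (S2 n) W" and x: "x \<in> alphabet n"
  shows "\<exists>k. 1 \<le> k \<and> 2 * k \<le> length W + 1 \<and>
    (\<forall>b. (if b = x then 1 else 0) + 2 * count_list (take (k - 1) (rev W)) b
          = count_list (take (2 * k - 1) (rev W)) b)"
proof -
  from cr x obtain v where v: "subword v (W @ [x])" "v \<in> S2 n" by (auto simp: crucial_def)
  from v(2) obtain X Y where XY: "v = X @ Y" "X \<in> words n" "Y \<in> words n" "X \<noteq> []" "Y \<noteq> []"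
    "content n X = content n Y" by (auto simp: S2_def)
  from v(1) obtain p q where pq: "W @ [x] = p @ v @ q" by (auto simp: subword_def)
  have q: "q = []"
  proof (rule ccontr)
    assume qn: "q \<noteq> []"
    have "last (W @ [x]) = last q" using pq qn by simp
    then have "last q = x" by simp
    then have "q = butlast q @ [x]" using qn append_butlast_last_id[of q] by simp
    then obtain q' where "q = q' @ [x]" by blast
    then have "W = p @ v @ q'" using pq by simp
    then have "subword v W" by (auto simp: subword_def)
    then show False using cr v(2) by (auto simp: crucial_def free_from_def)
  qed
  have "last (W @ [x]) = last Y" using pq q XY by simp
  then have "last Y = x" by simp
  then have "Y = butlast Y @ [x]" using XY(5) append_butlast_last_id[of Y] by simp
  then obtain Y' where Y': "Y = Y' @ [x]" by blast
  have W: "W = p @ X @ Y'" using pq q XY Y' by simp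
  have len: "length X = length Y" using words_len_eq XY by blast
  define k where "k = length X"
  have k1: "1 \<le> k" using XY k_def by (cases X) auto
  have lY': "length Y' = k - 1" using len Y' k_def by simp
  have rW: "rev W = rev Y' @ rev X @ rev p" using W by simp
  have t1: "take (k - 1) (rev W) = rev Y'" using rW lY' by simp
  have t2: "take (2 * k - 1) (rev W) = rev Y' @ rev X"
  proof -
    have "2 * k - 1 = length (rev Y' @ rev X)" using lY' k_def k1 by simp
    then show ?thesis using rW by (metis append_assoc append_eq_conv_conj)
  qed
  have cnt: "\<And>b. count_list X b = count_list Y b" using words_count_all XY by blast
  show ?thesis
  proof (intro exI conjI allI)
    show "1 \<le> k" by (rule k1)
    show "2 * k \<le> length W + 1" using W lY' k_def k1 by simp
    fix b
    show "(if b = x then 1 else 0) + 2 * count_list (take (k - 1) (rev W)) b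
          = count_list (take (2 * k - 1) (rev W)) b"
      using t1 t2 cnt[of b] Y' by auto
  qed
qed

lemma count_take_mono: "s \<le> t \<Longrightarrow> count_list (take s xs) b \<le> count_list (take t xs) b"
proof -
  assume "s \<le> t"
  then have "take t xs = take s xs @ take (t - s) (drop s xs)"
    using take_add[of s "t - s" xs] by simp
  then show ?thesis by (metis count_list_append le_add1)
qed

lemma count_take_le: "count_list (take t xs) b \<le> count_list xs b"
  by (metis append_take_drop_id count_list_append le_add1)

lemma lower_bound:
  assumes cr: "crucial (alphabet n) (S2 n) W"
    and abc: "a \<in> alphabet n" "b \<in> alphabet n" "c \<in> alphabet n" "a \<noteq> b" "a \<noteq> c" "b \<noteq> c"
    and c2: "nu a W = 2" "nu b W = 2" "nu c W = 2"
  shows "6 + 4 * (n - 3) \<le> length W"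
proof -
  define P where "P = (\<lambda>x k. 1 \<le> k \<and> 2 * k \<le> length W + 1 \<and>
    (\<forall>b. (if b = x then 1 else 0) + 2 * count_list (take (k - 1) (rev W)) b
          = count_list (take (2 * k - 1) (rev W)) b))"
  define kf where "kf = (\<lambda>x. SOME k. P x k)"
  have Pk: "\<And>x. x \<in> alphabet n \<Longrightarrow> P x (kf x)"
    unfolding kf_def using crucial_near[OF cr] P_def by (metis (no_types, lifting) someI_ex)
  define N where "N = (\<lambda>b t. count_list (take t (rev W)) b)"
  interpret nearsys N kf "alphabet n"
  proof
    show "\<And>b s t. s \<le> t \<Longrightarrow> N b s \<le> N b t" unfolding N_def by (rule count_take_mono)
    show "\<And>x b. x \<in> alphabet n \<Longrightarrow> (if b = x then 1 else 0) + 2 * N b (kf x - 1) = N b (2 * kf x - 1)"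
      using Pk unfolding P_def N_def by blast
    show "\<And>x. x \<in> alphabet n \<Longrightarrow> 1 \<le> kf x" using Pk unfolding P_def by blast
  qed
  have fin: "finite (alphabet n)" by (simp add: alphabet_def)
  have bd: "\<And>b t. N b t \<le> count_list W b"
    unfolding N_def using count_take_le count_list_rev by metis
  have "6 + 4 * (card (alphabet n) - 3) \<le> sum (count_list W) (alphabet n)"
    using count_bound[OF fin bd abc] c2 by (simp add: nu_def)
  moreover have "sum (count_list W) (alphabet n) = length W"
    using sum_count_set[of W "alphabet n"] cr fin by (simp add: crucial_def)
  moreover have "card (alphabet n) = n" by (simp add: alphabet_def)
  ultimately show ?thesis by simp
qed



lemma content_eqI:
  assumes "\<And>b. b \<in> alphabet n \<Longrightarrow> count_list X b = count_list Y b"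
  shows "content n X = content n Y"
  unfolding content_def nu_def using assms by (auto simp: alphabet_def)

lemma free_from_counts:
  assumes set: "set W \<subseteq> alphabet n"
    and H: "\<And>s l. 1 \<le> l \<Longrightarrow> s + 2*l \<le> length W \<Longrightarrow>
       (\<forall>b. count_list (take l (drop s (rev W))) b = count_list (take l (drop (s+l) (rev W))) b) \<Longrightarrow> False"
  shows "free_from (S2 n) W"
  unfolding free_from_def
proof (intro allI impI notI)
  fix v assume sv: "subword v W" and vS: "v \<in> S2 n"
  from vS obtain X Y where XY: "v = X @ Y" "X \<in> words n" "Y \<in> words n" "X \<noteq> []" "Y \<noteq> []"
    "content n X = content n Y" by (auto simp: S2_def)
  from sv obtain p q where pq: "W = p @ v @ q" by (auto simp: subword_def)
  have len: "length X = length Y" using words_len_eq XY by blast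
  define s where "s = length q"
  define l where "l = length Y"
  have rW: "rev W = rev q @ rev Y @ rev X @ rev p" using pq XY by simp
  have l1: "1 \<le> l" using XY l_def by (cases Y) auto
  have le: "s + 2*l \<le> length W" using pq XY len s_def l_def by simp
  have t1: "take l (drop s (rev W)) = rev Y" using rW s_def l_def by simp
  have t2: "take l (drop (s+l) (rev W)) = rev X" using rW s_def l_def len by simp
  have "\<forall>b. count_list (take l (drop s (rev W))) b = count_list (take l (drop (s+l) (rev W))) b"
    unfolding t1 t2 using words_count_all[OF XY(2,3,6)] by simp
  then show False using H[OF l1 le] by blast
qed

lemma crucial_from_near:
  assumes set: "set W \<subseteq> alphabet n" and ff: "free_from (S2 n) W"
    and near: "\<And>a. a \<in> alphabet n \<Longrightarrow> \<exists>k. 1 \<le> k \<and> 2*k \<le> length W + 1 \<and>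
       (\<forall>b\<in>alphabet n. count_list (a # take (k-1) (rev W)) b = count_list (take k (drop (k-1) (rev W))) b)"
  shows "crucial (alphabet n) (S2 n) W"
  unfolding crucial_def
proof (intro conjI ballI)
  show "set W \<subseteq> alphabet n" by (rule set)
  show "free_from (S2 n) W" by (rule ff)
  fix a assume a: "a \<in> alphabet n"
  obtain k where k: "1 \<le> k" "2*k \<le> length W + 1"
    "\<forall>b\<in>alphabet n. count_list (a # take (k-1) (rev W)) b = count_list (take k (drop (k-1) (rev W))) b"
    using near[OF a] by blast
  define U where "U = rev W"
  define X where "X = rev (take k (drop (k-1) U))"
  define Y where "Y = rev (a # take (k-1) U)"
  define p where "p = rev (drop (2*k-1) U)"
  have "a # U = (a # take (k-1) U) @ take k (drop (k-1) U) @ drop (2*k-1) U"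
  proof -
    have e: "drop (2*k-1) U = drop k (drop (k-1) U)" using k(1)
      by (simp add: drop_drop) (metis Nat.add_diff_assoc mult_2 )
    have "take k (drop (k-1) U) @ drop (2*k-1) U = drop (k-1) U"
      unfolding e by (rule append_take_drop_id)
    then show ?thesis by simp
  qed
  then have "W @ [a] = p @ X @ Y" unfolding p_def X_def Y_def U_def
    by (metis append.assoc rev.simps(2) rev_append rev_rev_ident)
  moreover have "X @ Y \<in> S2 n"
  proof -
    have sU: "set U \<subseteq> alphabet n" using set U_def by simp
    have "X \<in> words n" unfolding X_def words_def using sU
      by (auto dest: in_set_takeD in_set_dropD)
    moreover have "Y \<in> words n" unfolding Y_def words_def using sU a
      by (auto dest: in_set_takeD)
    moreover have "X \<noteq> []" unfolding X_def using k U_def by simp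
    moreover have "Y \<noteq> []" unfolding Y_def by simp
    moreover have "content n X = content n Y"
    proof (rule content_eqI)
      fix b assume b: "b \<in> alphabet n"
      from k(3) b have "count_list (a # take (k-1) (rev W)) b = count_list (take k (drop (k-1) (rev W))) b"
        by blast
      then show "count_list X b = count_list Y b" unfolding X_def Y_def U_def count_list_rev by simp
    qed
    ultimately show ?thesis unfolding S2_def by blast
  qed
  ultimately show "\<exists>u. subword u (W @ [a]) \<and> u \<in> S2 n"
    unfolding subword_def by (metis append_Nil2)
qed



definition f :: "nat \<Rightarrow> nat \<Rightarrow> nat" where
"f m t = (if t = 0 \<or> t = 2 then 1 else if t = 1 \<or> t = 4 then 2 else if t = 3 then 3
  else if t < 5 + m then t - 1
  else if t < 4 + 2*m then t - 1 - m
  else if t = 4 + 2*m \<or> t = 6 + 2*m then 1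
  else if t = 5 + 2*m \<or> t = 8 + 2*m then 2
  else if t = 7 + 2*m then 3
  else if t = 9 + 2*m then 4
  else if t = 10 + 2*m then m + 3
  else if t = 4*m + 7 then m + 4
  else if odd (t - 2*m) then (t - 2*m - 1) div 2
  else (t - 2*m - 4) div 2)"

definition pos :: "nat \<Rightarrow> nat \<Rightarrow> nat list" where
"pos m a = (if a = 1 then [0, 2, 2*m+4, 2*m+6]
  else if a = 2 then [1, 4, 2*m+5, 2*m+8]
  else if a = 3 then [3, 2*m+7]
  else if a = m + 4 then [4*m+7]
  else if a = m + 3 then [m+4, 2*m+10]
  else if 4 \<le> a \<and> a \<le> m + 2 then [a+1, a+1+m, 2*m+1+2*a, 2*m+4+2*a]
  else [])"


lemma fv1: "m \<ge> 2 \<Longrightarrow> f m 0 = 1 \<and> f m 2 = 1 \<and> f m (2*m+4) = 1 \<and> f m (2*m+6) = 1"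
  by (simp add: f_def)
lemma fv2: "m \<ge> 2 \<Longrightarrow> f m 1 = 2 \<and> f m 4 = 2 \<and> f m (2*m+5) = 2 \<and> f m (2*m+8) = 2"
  by (simp add: f_def)
lemma fv3: "m \<ge> 2 \<Longrightarrow> f m 3 = 3 \<and> f m (2*m+7) = 3 \<and> f m (4*m+7) = m+4 \<and> f m (m+4) = m+3 \<and> f m (2*m+10) = m+3 \<and> f m (2*m+9) = 4"
  by (simp add: f_def)

lemma f_odd: "m \<ge> 2 \<Longrightarrow> 5 \<le> a \<Longrightarrow> a \<le> m + 2 \<Longrightarrow> f m (2*m+1+2*a) = a"
proof -
  assume h: "m \<ge> 2" "5 \<le> a" "a \<le> m + 2"
  have e: "2*m+1+2*a - 2*m = 2*a+1" by simp
  have n: "2*m+1+2*a \<noteq> 4*m+7" using h by linarith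
  show ?thesis using h n unfolding f_def e by simp
qed

lemma f_even: "m \<ge> 2 \<Longrightarrow> 4 \<le> a \<Longrightarrow> a \<le> m + 2 \<Longrightarrow> f m (2*m+4+2*a) = a"
proof -
  assume h: "m \<ge> 2" "4 \<le> a" "a \<le> m + 2"
  have e: "2*m+4+2*a - 2*m = 2*a+4" by simp
  have o: "\<not> odd (2*a+4)" by simp
  have "2*m+4+2*a \<noteq> 4*m+7" by presburger
  then show ?thesis using h o unfolding f_def e by simp
qed

lemma f_A1: "m \<ge> 2 \<Longrightarrow> 4 \<le> a \<Longrightarrow> a \<le> m + 3 \<Longrightarrow> f m (a+1) = a"
  by (simp add: f_def)
lemma f_A2: "m \<ge> 2 \<Longrightarrow> 4 \<le> a \<Longrightarrow> a \<le> m + 2 \<Longrightarrow> f m (a+1+m) = a"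
  by (simp add: f_def)


lemma pos_c: "4 \<le> a \<Longrightarrow> a \<le> m + 2 \<Longrightarrow> pos m a = [a+1, a+1+m, 2*m+1+2*a, 2*m+4+2*a]"
  by (simp add: pos_def)

lemma f_pos2:
  assumes m: "m \<ge> 2" and t: "t \<in> set (pos m a)"
  shows "f m t = a \<and> t < 4*m+9"
proof -
  consider (a1) "a = 1" | (a2) "a = 2" | (a3) "a = 3" | (az) "a = m + 4" | (am) "a = m + 3"
    | (ac) "4 \<le> a" "a \<le> m + 2" | (no) "a = 0 \<or> a > m + 4" using m by linarith
  then show ?thesis
  proof cases
    case a1 then show ?thesis using t m fv1[OF m] by (auto simp: pos_def)
  next
    case a2 then show ?thesis using t m fv2[OF m] by (auto simp: pos_def)
  next
    case a3 then show ?thesis using t m fv3[OF m] by (auto simp: pos_def)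
  next
    case az then show ?thesis using t m fv3[OF m] by (auto simp: pos_def)
  next
    case am then show ?thesis using t m fv3[OF m] by (auto simp: pos_def)
  next
    case ac
    have "f m (2*m+1+2*a) = a"
    proof (cases "a = 4")
      case True
      have e: "2*m+1+2*a = 2*m+9" using True by simp
      show ?thesis unfolding e unfolding True using fv3[OF m] by blast
    next
      case False then show ?thesis using f_odd m ac by simp
    qed
    then show ?thesis using t pos_c[OF ac] ac f_A1[OF m] f_A2[OF m] f_even[OF m] by auto
  next
    case no then show ?thesis using t m by (auto simp: pos_def)
  qed
qed

lemma f_pos1:
  assumes m: "m \<ge> 2" and t: "t < 4*m+9"
  shows "t \<in> set (pos m (f m t))"
proof -
  consider (y) "t < 5" | (a1) "5 \<le> t" "t < 5 + m" | (a2) "5 + m \<le> t" "t < 4 + 2*m"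
    | (y2) "4 + 2*m \<le> t" "t \<le> 10 + 2*m" | (z) "t = 4*m+7" | (b) "11 + 2*m \<le> t" "t \<noteq> 4*m+7"
    using t by linarith
  then show ?thesis
  proof cases
    case y
    then have "t = 0 \<or> t = 1 \<or> t = 2 \<or> t = 3 \<or> t = 4" by linarith
    then show ?thesis using fv1[OF m] fv2[OF m] fv3[OF m] by (auto simp: pos_def)
  next
    case a1
    show ?thesis
    proof (cases "t = m + 4")
      case True then show ?thesis using fv3[OF m] m by (simp add: pos_def)
    next
      case False
      then have "f m t = t - 1" using a1 by (simp add: f_def)
      moreover have "pos m (t - 1) = [t, t+m, 2*m+1+2*(t-1), 2*m+4+2*(t-1)]"
        using pos_c[of "t - 1" m] a1 False by simp
      ultimately show ?thesis by simp
    qed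
  next
    case a2
    then have "f m t = t - 1 - m" by (simp add: f_def)
    moreover have "pos m (t - 1 - m) = [t - m, t, 2*m+1+2*(t-1-m), 2*m+4+2*(t-1-m)]"
      using pos_c[of "t - 1 - m" m] a2 by simp
    ultimately show ?thesis by simp
  next
    case y2
    then have "t = 2*m+4 \<or> t = 2*m+5 \<or> t = 2*m+6 \<or> t = 2*m+7 \<or> t = 2*m+8 \<or> t = 2*m+9 \<or> t = 2*m+10"
      by linarith
    then show ?thesis using fv1[OF m] fv2[OF m] fv3[OF m] m by (auto simp: pos_def)
  next
    case z then show ?thesis using fv3[OF m] by (simp add: pos_def)
  next
    case b
    have "\<exists>a. (t = 2*m+1+2*a \<and> 5 \<le> a \<and> a \<le> m+2) \<or> (t = 2*m+4+2*a \<and> 4 \<le> a \<and> a \<le> m+2)"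
      using b t by presburger
    then obtain a where "(t = 2*m+1+2*a \<and> 5 \<le> a \<and> a \<le> m+2) \<or> (t = 2*m+4+2*a \<and> 4 \<le> a \<and> a \<le> m+2)"
      by blast
    then show ?thesis
    proof
      assume h: "t = 2*m+1+2*a \<and> 5 \<le> a \<and> a \<le> m+2"
      then show ?thesis using f_odd[OF m, of a] pos_c[of a m] by simp
    next
      assume h: "t = 2*m+4+2*a \<and> 4 \<le> a \<and> a \<le> m+2"
      then show ?thesis using f_even[OF m, of a] pos_c[of a m] by simp
    qed
  qed
qed

lemma f_iff: "m \<ge> 2 \<Longrightarrow> t < 4*m+9 \<Longrightarrow> f m t = a \<longleftrightarrow> t \<in> set (pos m a)"
  using f_pos1 f_pos2 by blast


definition C :: "nat \<Rightarrow> nat \<Rightarrow> nat \<Rightarrow> nat \<Rightarrow> nat" where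
  "C m a x l = length (filter (\<lambda>p. x \<le> p \<and> p < x + l) (pos m a))"

lemma pos_1: "pos m 1 = [0, 2, 2*m+4, 2*m+6]" by (simp add: pos_def)
lemma pos_2: "pos m 2 = [1, 4, 2*m+5, 2*m+8]" by (simp add: pos_def)
lemma pos_3: "pos m 3 = [3, 2*m+7]" by (simp add: pos_def)
lemma pos_z: "pos m (m+4) = [4*m+7]" by (simp add: pos_def)
lemma pos_cm: "m \<ge> 2 \<Longrightarrow> pos m (m+3) = [m+4, 2*m+10]" by (simp add: pos_def)

lemma inner_A:
  assumes m: "m \<ge> 2" and l: "l \<ge> 1" and s: "5 \<le> s" and e: "s + 2*l \<le> 2*m+4"
    and E: "\<And>a. C m a s l = C m a (s+l) l"
  shows False
proof -
  consider (eq) "s + l = m + 5" | (lt) "s + l < m + 5" | (gt) "s + l > m + 5" by linarith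
  then show False
  proof cases
    case eq
    show False using E[of "m+3"] pos_cm[OF m] eq l e by (simp add: C_def split: if_split_asm)
  next
    case lt
    define a where "a = s + l - 2"
    have a: "4 \<le> a" "a \<le> m + 2" using lt s l a_def by auto
    show False using E[of a] pos_c[OF a] a_def l e s lt by (simp add: C_def split: if_split_asm)
  next
    case gt
    define a where "a = s + l - 2 - m"
    have a: "4 \<le> a" "a \<le> m + 2" using gt s l e a_def by auto
    show False using E[of a] pos_c[OF a] a_def l e s gt by (simp add: C_def split: if_split_asm)
  qed
qed

lemma inner_B:
  assumes m: "m \<ge> 2" and l: "l \<ge> 1" and s: "2*m+9 \<le> s" and e: "s + 2*l \<le> 4*m+7"
    and E: "\<And>a. C m a s l = C m a (s+l) l"
  shows False
proof -
  consider (s9) "s = 2*m+9" | (s10) "s = 2*m+10" | (od) a where "s = 2*m+1+2*a" "5 \<le> a" "a \<le> m+2"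
    | (ev) a where "s = 2*m+4+2*a" "4 \<le> a" "a \<le> m+2"
  proof -
    assume h1: "s = 2*m+9 \<Longrightarrow> thesis" and h2: "s = 2*m+10 \<Longrightarrow> thesis"
      and h3: "\<And>a. s = 2*m+1+2*a \<Longrightarrow> 5 \<le> a \<Longrightarrow> a \<le> m+2 \<Longrightarrow> thesis"
      and h4: "\<And>a. s = 2*m+4+2*a \<Longrightarrow> 4 \<le> a \<Longrightarrow> a \<le> m+2 \<Longrightarrow> thesis"
    have "s = 2*m+9 \<or> s = 2*m+10 \<or> (\<exists>a. s = 2*m+1+2*a \<and> 5 \<le> a \<and> a \<le> m+2)
       \<or> (\<exists>a. s = 2*m+4+2*a \<and> 4 \<le> a \<and> a \<le> m+2)" using s e l by presburger
    then show thesis using h1 h2 h3 h4 by blast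
  qed
  then show False
  proof cases
    case s9
    show False
    proof (cases "l = 2 \<or> l = 3")
      case True
      then show False using E[of "m+3"] pos_cm[OF m] s9 by (auto simp: C_def split: if_split_asm)
    next
      case False
      have a: "4 \<le> (4::nat)" "4 \<le> m + 2" using m by auto
      show False using E[of 4] pos_c[OF a] s9 False l by (simp add: C_def split: if_split_asm)
    qed
  next
    case s10
    show False using E[of "m+3"] pos_cm[OF m] s10 l by (simp add: C_def split: if_split_asm)
  next
    case (od a)
    show False
    proof (cases "l = 2 \<or> l = 3")
      case True
      have b: "4 \<le> a - 1" "a - 1 \<le> m + 2" using od by auto
      have q1: "2*m+1+2*(a-1) = s - 2" "2*m+4+2*(a-1) = s + 1" "a - 1 + 1 = a" "a - 1 + 1 + m = a + m"
        using od by arith+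
      have p: "pos m (a - 1) = [a, a+m, s - 2, s + 1]" using pos_c[OF b] unfolding q1 .
      show False using E[of "a-1"] p od True by (auto simp: C_def split: if_split_asm)
    next
      case False
      have b: "4 \<le> a" "a \<le> m + 2" using od by auto
      show False using E[of a] pos_c[OF b] od False l by (simp add: C_def split: if_split_asm)
    qed
  next
    case (ev a)
    have b: "4 \<le> a" "a \<le> m + 2" using ev by auto
    show False using E[of a] pos_c[OF b] ev l by (simp add: C_def split: if_split_asm)
  qed
qed


lemma asf_core:
  assumes m: "m \<ge> 2" and l: "l \<ge> 1" and L: "s + 2*l \<le> 4*m+9"
    and E: "\<And>a. C m a s l = C m a (s+l) l"
  shows False
proof -
  have e7: "s + 2*l \<le> 4*m+7"
    using E[of "m+4"] L l unfolding C_def pos_z by (simp split: if_split_asm; arith)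
  have D3: "(s \<le> 3 \<and> 3 < s+l \<and> s+l \<le> 2*m+7 \<and> 2*m+7 < s+2*l) \<or> s+2*l \<le> 3
     \<or> (4 \<le> s \<and> s+2*l \<le> 2*m+7) \<or> 2*m+8 \<le> s"
    using E[of 3] l unfolding C_def pos_3 by (simp split: if_split_asm; arith)
  from D3 show False
  proof (elim disjE)
    assume "s+2*l \<le> 3"
    then show False using E[of 1] l unfolding C_def pos_1 by (simp split: if_split_asm; arith)
  next
    assume h: "4 \<le> s \<and> s+2*l \<le> 2*m+7"
    have "s + 2*l \<le> 2*m+4"
    proof (rule ccontr)
      assume nh: "\<not> ?thesis"
      have "s + l = 2*m+5 \<or> s + l = 2*m+6" 
        using E[of 1] h nh l unfolding C_def pos_1 by (simp split: if_split_asm; arith)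
      then have "(s = 2*m+4 \<and> l = 1) \<or> (s = 2*m+3 \<and> l = 2) \<or> (s = 2*m+5 \<and> l = 1)"
        using h nh l by arith
      then show False using E[of 2] m unfolding C_def pos_2 by (elim disjE; simp split: if_split_asm)
    qed
    moreover have "s \<noteq> 4"
    proof
      assume "s = 4"
      then show False using E[of 2] h l \<open>s + 2*l \<le> 2*m+4\<close> unfolding C_def pos_2 by (simp split: if_split_asm; arith)
    qed
    ultimately show False using inner_A[OF m l _ _ E] h by simp
  next
    assume h: "2*m+8 \<le> s"
    have "s \<noteq> 2*m+8"
    proof
      assume "s = 2*m+8"
      then show False using E[of 2] l unfolding C_def pos_2 by (simp split: if_split_asm; arith)
    qed
    then show False using inner_B[OF m l _ e7 E] h by simp
  next
    assume h: "s \<le> 3 \<and> 3 < s+l \<and> s+l \<le> 2*m+7 \<and> 2*m+7 < s+2*l"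
    have hm: "m + 5 \<le> s + l \<and> 2*m+11 \<le> s + 2*l"
      using E[of "m+3"] h unfolding C_def pos_cm[OF m] by (simp split: if_split_asm; arith)
    show False
    proof (cases "s + l \<le> 2*m+4")
      case True
      have s0: "s = 0" using E[of 1] h hm True unfolding C_def pos_1 by (simp split: if_split_asm; arith)
      define a where "a = l - m - 1"
      have a: "4 \<le> a" "a \<le> m + 2" using a_def s0 hm e7 by auto
      have q: "a + 1 = l - m" "l - m + m = l" "2*m+1+2*a = 2*l - 1" "2*m+4+2*a = 2*l+2"
        using a_def s0 hm e7 by arith+
      have p: "pos m a = [l - m, l, 2*l - 1, 2*l+2]" using pos_c[OF a] unfolding q .
      show False using E[of a] p s0 hm unfolding C_def by (simp split: if_split_asm; arith)
    next
      case False
      have s3: "s = 3 \<and> s + l = 2*m+5"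
        using E[of 1] h hm False e7 unfolding C_def pos_1 by (simp split: if_split_asm; arith)
      have l2: "l = 2*m+2" using s3 by arith
      have s3': "s = 3" using s3 by simp
      show False using E[of 2] s3' l2 m unfolding C_def pos_2 by (simp split: if_split_asm)
    qed
  qed
qed


definition U :: "nat \<Rightarrow> nat list" where "U m = map (f m) [0..<4*m+9]"

lemma distinct_pos: "m \<ge> 2 \<Longrightarrow> distinct (pos m a)"
  by (simp add: pos_def)

lemma cnt_U:
  assumes m: "m \<ge> 2" and xl: "x + l \<le> 4*m+9"
  shows "count_list (take l (drop x (U m))) a = C m a x l"
proof -
  have t: "take l (drop x (U m)) = map (f m) [x..<x+l]"
    unfolding U_def using xl by (simp add: drop_map take_map)
  have "count_list (map (f m) [x..<x+l]) a = length (filter (\<lambda>t. a = f m t) [x..<x+l])"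
    by (simp add: count_list_eq_length_filter filter_map o_def)
  also have "\<dots> = card ({t. a = f m t} \<inter> set [x..<x+l])"
    by (rule distinct_length_filter) simp
  also have "{t. a = f m t} \<inter> set [x..<x+l] = {p. x \<le> p \<and> p < x + l} \<inter> set (pos m a)"
  proof -
    have *: "\<And>t. t < x + l \<Longrightarrow> (a = f m t) = (t \<in> set (pos m a))"
      using f_iff[OF m] xl by (metis less_le_trans)
    show ?thesis
    proof (rule set_eqI)
      fix t show "t \<in> {t. a = f m t} \<inter> set [x..<x+l] \<longleftrightarrow> t \<in> {p. x \<le> p \<and> p < x + l} \<inter> set (pos m a)"
        using *[of t] by auto
    qed
  qed
  also have "card \<dots> = C m a x l"
    unfolding C_def by (rule distinct_length_filter[symmetric]) (rule distinct_pos[OF m])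
  finally show ?thesis using t by simp
qed

lemma set_U: "m \<ge> 2 \<Longrightarrow> set (U m) \<subseteq> alphabet (m+4)"
proof
  fix a assume m: "m \<ge> 2" and a: "a \<in> set (U m)"
  then obtain t where t: "t < 4*m+9" "a = f m t" by (auto simp: U_def)
  then have "t \<in> set (pos m a)" using f_pos1[OF m] by simp
  then have "pos m a \<noteq> []" by auto
  then show "a \<in> alphabet (m+4)" unfolding alphabet_def pos_def by (auto split: if_splits)
qed

lemma len_U: "length (U m) = 4*m+9" by (simp add: U_def)


lemma pos_o: assumes "b = 0 \<or> m + 4 < b" shows "pos m b = []"
  using assms unfolding pos_def by auto

definition kk :: "nat \<Rightarrow> nat \<Rightarrow> nat" where
  "kk m a = (if a \<le> 3 then a else if a = m + 3 then m + 5 else if a = m + 4 then 2*m+5 else m+2+a)"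

lemma near_a1:
  assumes m: "m \<ge> 2" and a: "a = 1"
  shows "(if a = b then 1 else 0) + C m b 0 (1 - 1) = C m b (1 - 1) (1)"
proof -
  consider (c1) "b = 1" | (c2) "b = 2" | (c3) "b = 3" | (c4) "b = m + 4" | (c5) "b = m + 3"
    | (c6) "4 \<le> b \<and> b \<le> m + 2" | (c7) "b = 0 \<or> m + 4 < b" by linarith
  then show ?thesis
  proof cases
    case c1
    show ?thesis using m a c1 unfolding C_def c1 pos_1 by (simp split: if_split; arith)
  next
    case c2
    show ?thesis using m a c2 unfolding C_def c2 pos_2 by (simp split: if_split; arith)
  next
    case c3
    show ?thesis using m a c3 unfolding C_def c3 pos_3 by (simp split: if_split; arith)
  next
    case c4
    show ?thesis using m a c4 unfolding C_def c4 pos_z by (simp split: if_split; arith)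
  next
    case c5
    show ?thesis using m a c5 unfolding C_def c5 pos_cm[OF m] by (simp split: if_split; arith)
  next
    case c6
    then have bb: "4 \<le> b" "b \<le> m + 2" by auto
    show ?thesis using m a c6 unfolding C_def pos_c[OF bb] by (simp split: if_split; arith)
  next
    case c7
    show ?thesis using m a c7 unfolding C_def pos_o[OF c7] by (simp split: if_split; arith)
  qed
qed

lemma near_a2:
  assumes m: "m \<ge> 2" and a: "a = 2"
  shows "(if a = b then 1 else 0) + C m b 0 (2 - 1) = C m b (2 - 1) (2)"
proof -
  consider (c1) "b = 1" | (c2) "b = 2" | (c3) "b = 3" | (c4) "b = m + 4" | (c5) "b = m + 3"
    | (c6) "4 \<le> b \<and> b \<le> m + 2" | (c7) "b = 0 \<or> m + 4 < b" by linarith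
  then show ?thesis
  proof cases
    case c1
    show ?thesis using m a c1 unfolding C_def c1 pos_1 by (simp split: if_split; arith)
  next
    case c2
    show ?thesis using m a c2 unfolding C_def c2 pos_2 by (simp split: if_split; arith)
  next
    case c3
    show ?thesis using m a c3 unfolding C_def c3 pos_3 by (simp split: if_split; arith)
  next
    case c4
    show ?thesis using m a c4 unfolding C_def c4 pos_z by (simp split: if_split; arith)
  next
    case c5
    show ?thesis using m a c5 unfolding C_def c5 pos_cm[OF m] by (simp split: if_split; arith)
  next
    case c6
    then have bb: "4 \<le> b" "b \<le> m + 2" by auto
    show ?thesis using m a c6 unfolding C_def pos_c[OF bb] by (simp split: if_split; arith)
  next
    case c7
    show ?thesis using m a c7 unfolding C_def pos_o[OF c7] by (simp split: if_split; arith)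
  qed
qed

lemma near_a3:
  assumes m: "m \<ge> 2" and a: "a = 3"
  shows "(if a = b then 1 else 0) + C m b 0 (3 - 1) = C m b (3 - 1) (3)"
proof -
  consider (c1) "b = 1" | (c2) "b = 2" | (c3) "b = 3" | (c4) "b = m + 4" | (c5) "b = m + 3"
    | (c6) "4 \<le> b \<and> b \<le> m + 2" | (c7) "b = 0 \<or> m + 4 < b" by linarith
  then show ?thesis
  proof cases
    case c1
    show ?thesis using m a c1 unfolding C_def c1 pos_1 by (simp split: if_split; arith)
  next
    case c2
    show ?thesis using m a c2 unfolding C_def c2 pos_2 by (simp split: if_split; arith)
  next
    case c3
    show ?thesis using m a c3 unfolding C_def c3 pos_3 by (simp split: if_split; arith)
  next
    case c4
    show ?thesis using m a c4 unfolding C_def c4 pos_z by (simp split: if_split; arith)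
  next
    case c5
    show ?thesis using m a c5 unfolding C_def c5 pos_cm[OF m] by (simp split: if_split; arith)
  next
    case c6
    then have bb: "4 \<le> b" "b \<le> m + 2" by auto
    show ?thesis using m a c6 unfolding C_def pos_c[OF bb] by (simp split: if_split; arith)
  next
    case c7
    show ?thesis using m a c7 unfolding C_def pos_o[OF c7] by (simp split: if_split; arith)
  qed
qed

lemma near_az:
  assumes m: "m \<ge> 2" and a: "a = m + 4"
  shows "(if a = b then 1 else 0) + C m b 0 (2*m+5 - 1) = C m b (2*m+5 - 1) (2*m+5)"
proof -
  consider (c1) "b = 1" | (c2) "b = 2" | (c3) "b = 3" | (c4) "b = m + 4" | (c5) "b = m + 3"
    | (c6) "4 \<le> b \<and> b \<le> m + 2" | (c7) "b = 0 \<or> m + 4 < b" by linarith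
  then show ?thesis
  proof cases
    case c1
    show ?thesis using m a c1 unfolding C_def c1 pos_1 by (simp split: if_split; arith)
  next
    case c2
    show ?thesis using m a c2 unfolding C_def c2 pos_2 by (simp split: if_split; arith)
  next
    case c3
    show ?thesis using m a c3 unfolding C_def c3 pos_3 by (simp split: if_split; arith)
  next
    case c4
    show ?thesis using m a c4 unfolding C_def c4 pos_z by (simp split: if_split; arith)
  next
    case c5
    show ?thesis using m a c5 unfolding C_def c5 pos_cm[OF m] by (simp split: if_split; arith)
  next
    case c6
    then have bb: "4 \<le> b" "b \<le> m + 2" by auto
    show ?thesis using m a c6 unfolding C_def pos_c[OF bb] by (simp split: if_split; arith)
  next
    case c7
    show ?thesis using m a c7 unfolding C_def pos_o[OF c7] by (simp split: if_split; arith)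
  qed
qed

lemma near_am:
  assumes m: "m \<ge> 2" and a: "a = m + 3"
  shows "(if a = b then 1 else 0) + C m b 0 (m+5 - 1) = C m b (m+5 - 1) (m+5)"
proof -
  consider (c1) "b = 1" | (c2) "b = 2" | (c3) "b = 3" | (c4) "b = m + 4" | (c5) "b = m + 3"
    | (c6) "4 \<le> b \<and> b \<le> m + 2" | (c7) "b = 0 \<or> m + 4 < b" by linarith
  then show ?thesis
  proof cases
    case c1
    show ?thesis using m a c1 unfolding C_def c1 pos_1 by (simp split: if_split; arith)
  next
    case c2
    show ?thesis using m a c2 unfolding C_def c2 pos_2 by (simp split: if_split; arith)
  next
    case c3
    show ?thesis using m a c3 unfolding C_def c3 pos_3 by (simp split: if_split; arith)
  next
    case c4
    show ?thesis using m a c4 unfolding C_def c4 pos_z by (simp split: if_split; arith)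
  next
    case c5
    show ?thesis using m a c5 unfolding C_def c5 pos_cm[OF m] by (simp split: if_split; arith)
  next
    case c6
    then have bb: "4 \<le> b" "b \<le> m + 2" by auto
    show ?thesis using m a c6 unfolding C_def pos_c[OF bb] by (simp split: if_split; arith)
  next
    case c7
    show ?thesis using m a c7 unfolding C_def pos_o[OF c7] by (simp split: if_split; arith)
  qed
qed

lemma near_ac:
  assumes m: "m \<ge> 2" and a: "4 \<le> a \<and> a \<le> m + 2"
  shows "(if a = b then 1 else 0) + C m b 0 (m+2+a - 1) = C m b (m+2+a - 1) (m+2+a)"
proof -
  consider (c1) "b = 1" | (c2) "b = 2" | (c3) "b = 3" | (c4) "b = m + 4" | (c5) "b = m + 3"
    | (c6) "4 \<le> b \<and> b \<le> m + 2" | (c7) "b = 0 \<or> m + 4 < b" by linarith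
  then show ?thesis
  proof cases
    case c1
    show ?thesis using m a c1 unfolding C_def c1 pos_1 by (simp split: if_split; arith)
  next
    case c2
    show ?thesis using m a c2 unfolding C_def c2 pos_2 by (simp split: if_split; arith)
  next
    case c3
    show ?thesis using m a c3 unfolding C_def c3 pos_3 by (simp split: if_split; arith)
  next
    case c4
    show ?thesis using m a c4 unfolding C_def c4 pos_z by (simp split: if_split; arith)
  next
    case c5
    show ?thesis using m a c5 unfolding C_def c5 pos_cm[OF m] by (simp split: if_split; arith)
  next
    case c6
    then have bb: "4 \<le> b" "b \<le> m + 2" by auto
    show ?thesis using m a c6 unfolding C_def pos_c[OF bb] by (simp split: if_split; arith)
  next
    case c7
    show ?thesis using m a c7 unfolding C_def pos_o[OF c7] by (simp split: if_split; arith)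
  qed
qed



definition chk :: "nat list \<Rightarrow> nat \<Rightarrow> bool" where
 "chk W n = list_all (\<lambda>s. list_all (\<lambda>l. s + 2*l \<le> length W \<longrightarrow>
     list_ex (\<lambda>b. count_list (take l (drop s (rev W))) b \<noteq> count_list (take l (drop (s+l) (rev W))) b) [1..<n+1])
   [1..<length W + 1]) [0..<length W]"

definition nchk :: "nat list \<Rightarrow> nat \<Rightarrow> bool" where
 "nchk W n = list_all (\<lambda>a. list_ex (\<lambda>k. 2*k \<le> length W + 1 \<and>
     list_all (\<lambda>b. count_list (a # take (k-1) (rev W)) b = count_list (take k (drop (k-1) (rev W))) b) [1..<n+1])
   [1..<length W + 2]) [1..<n+1]"


lemma near_all:
  assumes m: "m \<ge> 2" and a: "a \<in> alphabet (m+4)"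
  shows "(if a = b then 1 else 0) + C m b 0 (kk m a - 1) = C m b (kk m a - 1) (kk m a)"
proof -
  have a1: "1 \<le> a" "a \<le> m + 4" using a by (auto simp: alphabet_def)
  consider "a = 1" | "a = 2" | "a = 3" | "a = m + 4" | "a = m + 3" | "4 \<le> a \<and> a \<le> m + 2"
    using a1 by linarith
  then show ?thesis
  proof cases
    case 1 then show ?thesis using near_a1[OF m 1] m by (simp add: kk_def)
  next
    case 2 then show ?thesis using near_a2[OF m 2] m by (simp add: kk_def)
  next
    case 3 then show ?thesis using near_a3[OF m 3] m by (simp add: kk_def)
  next
    case 4 then show ?thesis using near_az[OF m 4] m by (simp add: kk_def)
  next
    case 5 then show ?thesis using near_am[OF m 5] m by (simp add: kk_def)
  next
    case 6 then show ?thesis using near_ac[OF m 6] m by (simp add: kk_def)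
  qed
qed

lemma kk_bounds: "m \<ge> 2 \<Longrightarrow> a \<in> alphabet (m+4) \<Longrightarrow> 1 \<le> kk m a \<and> kk m a \<le> 2*m+5"
  by (auto simp: kk_def alphabet_def)

lemma family_crucial:
  assumes m: "m \<ge> 2"
  shows "crucial (alphabet (m+4)) (S2 (m+4)) (rev (U m))"
proof (rule crucial_from_near)
  show "set (rev (U m)) \<subseteq> alphabet (m+4)" using set_U[OF m] by simp
  show "free_from (S2 (m+4)) (rev (U m))"
  proof (rule free_from_counts)
    show "set (rev (U m)) \<subseteq> alphabet (m+4)" using set_U[OF m] by simp
    fix s l assume l: "1 \<le> l" and L: "s + 2*l \<le> length (rev (U m))"
      and H: "\<forall>b. count_list (take l (drop s (rev (rev (U m))))) b = count_list (take l (drop (s+l) (rev (rev (U m))))) b"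
    have L': "s + 2*l \<le> 4*m+9" using L len_U by simp
    have "\<And>a. C m a s l = C m a (s+l) l"
    proof -
      fix a
      have "count_list (take l (drop s (U m))) a = count_list (take l (drop (s+l) (U m))) a" using H by simp
      then show "C m a s l = C m a (s+l) l" using cnt_U[OF m, of s l a] cnt_U[OF m, of "s+l" l a] L' by simp
    qed
    then show False using asf_core[OF m l L'] by blast
  qed
  fix a assume a: "a \<in> alphabet (m+4)"
  define k where "k = kk m a"
  have kb: "1 \<le> k" "k \<le> 2*m+5" using kk_bounds[OF m a] k_def by auto
  show "\<exists>k. 1 \<le> k \<and> 2*k \<le> length (rev (U m)) + 1 \<and>
       (\<forall>b\<in>alphabet (m+4). count_list (a # take (k-1) (rev (rev (U m)))) b = count_list (take k (drop (k-1) (rev (rev (U m))))) b)"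
  proof (intro exI conjI ballI)
    show "1 \<le> k" by (rule kb(1))
    show "2*k \<le> length (rev (U m)) + 1" using kb len_U by simp
    fix b
    have c1: "count_list (take (k-1) (U m)) b = C m b 0 (k-1)"
      using cnt_U[OF m, of 0 "k-1" b] kb by simp
    have c2: "count_list (take k (drop (k-1) (U m))) b = C m b (k-1) k"
      using cnt_U[OF m, of "k-1" k b] kb by simp
    show "count_list (a # take (k-1) (rev (rev (U m)))) b = count_list (take k (drop (k-1) (rev (rev (U m))))) b"
    proof -
      have e: "(if a = b then 1 else 0) + C m b 0 (k - 1) = C m b (k - 1) k"
        using near_all[OF m a, of b] unfolding k_def .
      have "count_list (a # take (k-1) (U m)) b = (if a = b then 1 else 0) + count_list (take (k-1) (U m)) b"
        by simp
      then show ?thesis using e c1 c2 by simp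
    qed
  qed
qed

lemma chk_free:
  assumes "chk W n" "set W \<subseteq> alphabet n"
  shows "free_from (S2 n) W"
proof (rule free_from_counts[OF assms(2)])
  fix s l assume l: "1 \<le> l" and L: "s + 2*l \<le> length W"
    and H: "\<forall>b. count_list (take l (drop s (rev W))) b = count_list (take l (drop (s+l) (rev W))) b"
  have "s \<in> set [0..<length W]" "l \<in> set [1..<length W + 1]" using l L by auto
  then have "list_ex (\<lambda>b. count_list (take l (drop s (rev W))) b \<noteq> count_list (take l (drop (s+l) (rev W))) b) [1..<n+1]"
    using assms(1) L unfolding chk_def list_all_iff by blast
  then show False using H by (auto simp: list_ex_iff)
qed

lemma chk_crucial:
  assumes "chk W n" "nchk W n" "set W \<subseteq> alphabet n"
  shows "crucial (alphabet n) (S2 n) W"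
proof (rule crucial_from_near[OF assms(3) chk_free[OF assms(1,3)]])
  fix a assume a: "a \<in> alphabet n"
  then have "a \<in> set [1..<n+1]" by (auto simp: alphabet_def)
  then obtain k where k: "k \<in> set [1..<length W + 2]" "2*k \<le> length W + 1"
    "list_all (\<lambda>b. count_list (a # take (k-1) (rev W)) b = count_list (take k (drop (k-1) (rev W))) b) [1..<n+1]"
    using assms(2) unfolding nchk_def list_all_iff list_ex_iff by blast
  show "\<exists>k. 1 \<le> k \<and> 2*k \<le> length W + 1 \<and>
       (\<forall>b\<in>alphabet n. count_list (a # take (k-1) (rev W)) b = count_list (take k (drop (k-1) (rev W))) b)"
  proof (intro exI conjI ballI)
    show "1 \<le> k" using k(1) by auto
    show "2*k \<le> length W + 1" by (rule k(2))
    fix b assume "b \<in> alphabet n"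
    then have "b \<in> set [1..<n+1]" by (auto simp: alphabet_def)
    then show "count_list (a # take (k-1) (rev W)) b = count_list (take k (drop (k-1) (rev W))) b"
      using k(3) unfolding list_all_iff by blast
  qed
qed

lemma small3: "chk [1,2,3,1,3] 3 \<and> nchk [1,2,3,1,3] 3" by code_simp
lemma small4: "chk [1,2,3,1,4,1,3,1,4] 4 \<and> nchk [1,2,3,1,4,1,3,1,4] 4" by code_simp
lemma small5: "chk [1,2,3,1,4,5,4,1,3,1,4,5,4] 5 \<and> nchk [1,2,3,1,4,5,4,1,3,1,4,5,4] 5" by code_simp

lemma exists_short:
  assumes n: "n \<ge> 3"
  shows "\<exists>V. crucial (alphabet n) (S2 n) V \<and> length V + 7 = 4 * n"
proof -
  consider "n = 3" | "n = 4" | "n = 5" | "n \<ge> 6" using n by linarith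
  then show ?thesis
  proof cases
    case 1
    have "set [1,2,3,1,3::nat] \<subseteq> alphabet 3" by (auto simp: alphabet_def)
    then have "crucial (alphabet 3) (S2 3) [1,2,3,1,3]" using chk_crucial small3 by blast
    then show ?thesis using 1 by (intro exI[of _ "[1,2,3,1,3]"]) simp
  next
    case 2
    have "set [1,2,3,1,4,1,3,1,4::nat] \<subseteq> alphabet 4" by (auto simp: alphabet_def)
    then have "crucial (alphabet 4) (S2 4) [1,2,3,1,4,1,3,1,4]" using chk_crucial small4 by blast
    then show ?thesis using 2 by (intro exI[of _ "[1,2,3,1,4,1,3,1,4]"]) simp
  next
    case 3
    have "set [1,2,3,1,4,5,4,1,3,1,4,5,4::nat] \<subseteq> alphabet 5" by (auto simp: alphabet_def)
    then have "crucial (alphabet 5) (S2 5) [1,2,3,1,4,5,4,1,3,1,4,5,4]" using chk_crucial small5 by blast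
    then show ?thesis using 3 by (intro exI[of _ "[1,2,3,1,4,5,4,1,3,1,4,5,4]"]) simp
  next
    case 4
    define m where "m = n - 4"
    have m: "m \<ge> 2" and nm: "n = m + 4" using 4 m_def by auto
    show ?thesis using family_crucial[OF m] len_U[of m] nm by (intro exI[of _ "rev (U m)"]) simp
  qed
qed

theorem proposition1:
  fixes n :: nat and W :: "nat list"
  assumes "n \<ge> 1"
    and "minimal_crucial (alphabet n) (S2 n) W"
  shows "\<not> (\<exists>a b c. a \<in> alphabet n \<and> b \<in> alphabet n \<and> c \<in> alphabet n \<and>
              a \<noteq> b \<and> a \<noteq> c \<and> b \<noteq> c \<and>
              nu a W = 2 \<and> nu b W = 2 \<and> nu c W = 2)"
proof
  assume "\<exists>a b c. a \<in> alphabet n \<and> b \<in> alphabet n \<and> c \<in> alphabet n \<and>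
              a \<noteq> b \<and> a \<noteq> c \<and> b \<noteq> c \<and>
              nu a W = 2 \<and> nu b W = 2 \<and> nu c W = 2"
  then obtain a b c where abc: "a \<in> alphabet n" "b \<in> alphabet n" "c \<in> alphabet n"
    "a \<noteq> b" "a \<noteq> c" "b \<noteq> c" "nu a W = 2" "nu b W = 2" "nu c W = 2" by blast
  have cr: "crucial (alphabet n) (S2 n) W" using assms(2) by (simp add: minimal_crucial_def)
  have lb: "6 + 4 * (n - 3) \<le> length W" using lower_bound[OF cr abc] .
  have "card {a, b, c} \<le> card (alphabet n)"
    using abc by (intro card_mono) (auto simp: alphabet_def)
  then have n3: "n \<ge> 3" using abc by (simp add: alphabet_def)
  obtain V where V: "crucial (alphabet n) (S2 n) V" "length V + 7 = 4 * n" using exists_short[OF n3] by blast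
  have "length W \<le> length V" using assms(2) V(1) by (simp add: minimal_crucial_def)
  then show False using lb V(2) n3 by linarith
qed

end
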